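(* For all $r\ge3$, $$\sum_{N>0}\dim_{\mathbb Q}\ker\big(E^{(2)}_{N,r}\cdots E^{(r-1)}_{N,r}\big)\,x^N=\mathbb O(x)\sum_{N>0}\dim_{\mathbb Q}\ker C_{N,r-1}\,x^N.$$
   Context: For integers $N,r\ge1$ let $S_{N,r}=\{(n_1,\dots,n_r)\in\mathbb Z^r:\ n_1+\dots+n_r=N,\ \text{each } n_i\ge3 \text{ odd}\}$; when used as an index set it is ordered lexicographically decreasingly. For $m=(m_1,\dots,m_r)$ and $n=(n_1,\dots,n_r)$ let $\delta\binom{m}{n}=1$ if $m_i=n_i$ for all $i$, and $0$ otherwise. Ihara action: for $f\in\mathbb Q[t]$ and a polynomial $g$ in $r-1$ variables, $(f\mathbin{\underline\circ}g)(x_1,\dots,x_r)=f(x_1)g(x_2,\dots,x_r)+\sum_{i=1}^{r-1}\big(f(x_{i+1}-x_i)g(x_1,\dots,\widehat{x_{i+1}},\dots,x_r)-(-1)^{\deg f}f(x_i-x_{i+1})g(x_1,\dots,\widehat{x_i},\dots,x_r)\big)$ (hats denote omitted variables). For positive integers $m_i,n_i$, $e\binom{m_1,\dots,m_r}{n_1,\dots,n_r}$ is the coefficient of $x_1^{n_1-1}\cdots x_r^{n_r-1}$ in $t^{m_1-1}\mathbin{\underline\circ}\,(y_1^{m_2-1}\cdots y_{r-1}^{m_r-1})$. $E_{N,r}$ is the $S_{N,r}\times S_{N,r}$ matrix with $(m,n)$-entry $e\binom{m}{n}$. For $2\le j\le r$, $E^{(j)}_{N,r}$ is the $S_{N,r}\times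 S_{N,r}$ matrix with $(m,n)$-entry $\delta\binom{m_1,\dots,m_{r-j}}{n_1,\dots,n_{r-j}}\,e\binom{m_{r-j+1},\dots,m_r}{n_{r-j+1},\dots,n_r}$ (so $E^{(r)}_{N,r}=E_{N,r}$). $C_{N,r}=E^{(2)}_{N,r}E^{(3)}_{N,r}\cdots E^{(r-1)}_{N,r}E_{N,r}$ (so $C_{N,2}=E_{N,2}$). For a matrix $A$, $\ker A$ denotes its right kernel. $\mathbb O(x)=\frac{x^3}{1-x^2}$. *)

theory Defs
  imports "HOL-Library.Poly_Mapping" "HOL-Library.List_Lexorder"
    "HOL-Computational_Algebra.Polynomial"
    "HOL-Computational_Algebra.Formal_Power_Series"
    "Jordan_Normal_Form.Matrix_Kernel"
begin

section \<open>Multivariate polynomials over Q in variables x_1, x_2, ... (0-based index)\<close>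

type_synonym mpoly = "(nat \<Rightarrow>\<^sub>0 nat) \<Rightarrow>\<^sub>0 rat"

definition mvar :: "nat \<Rightarrow> mpoly" where
  "mvar i = Poly_Mapping.single (Poly_Mapping.single i 1) 1"

definition mconst :: "rat \<Rightarrow> mpoly" where
  "mconst c = Poly_Mapping.single 0 c"

definition eval_at :: "rat poly \<Rightarrow> mpoly \<Rightarrow> mpoly" where
  "eval_at f q = poly (map_poly mconst f) q"

definition ins_gap :: "nat \<Rightarrow> (nat \<Rightarrow>\<^sub>0 nat) \<Rightarrow> (nat \<Rightarrow>\<^sub>0 nat)" where
  "ins_gap i \<alpha> = Abs_poly_mapping (\<lambda>j. if j < i then Poly_Mapping.lookup \<alpha> j
                                       else if j = i then 0 else Poly_Mapping.lookup \<alpha> (j - 1))"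

text \<open>g(x_1,...,hat x_(i+1),...,x_r) (0-based: variable i omitted).\<close>
definition subst_skip :: "nat \<Rightarrow> mpoly \<Rightarrow> mpoly" where
  "subst_skip i g = (\<Sum>\<alpha>\<in>Poly_Mapping.keys g. Poly_Mapping.single (ins_gap i \<alpha>) (Poly_Mapping.lookup g \<alpha>))"

text \<open>Ihara action f \<circ> g, with g a polynomial in r-1 variables, result in r variables.\<close>
definition ihara :: "rat poly \<Rightarrow> nat \<Rightarrow> mpoly \<Rightarrow> mpoly" where
  "ihara f r g = eval_at f (mvar 0) * subst_skip 0 g
     + (\<Sum>i<r - 1. eval_at f (mvar (i + 1) - mvar i) * subst_skip (i + 1) g
                   - (-1) ^ degree f * eval_at f (mvar i - mvar (i + 1)) * subst_skip i g)"

definition mono_m1 :: "nat list \<Rightarrow> (nat \<Rightarrow>\<^sub>0 nat)" where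
  "mono_m1 ks = Poly_Mapping.nth (map (\<lambda>k. k - 1) ks)"

text \<open>e(m; n): coefficient of x_1^(n_1-1)...x_r^(n_r-1) in t^(m_1-1) \<circ> y_1^(m_2-1)...y_(r-1)^(m_r-1).\<close>
definition ecoef :: "nat list \<Rightarrow> nat list \<Rightarrow> rat" where
  "ecoef m n = Poly_Mapping.lookup (ihara (monom 1 (hd m - 1)) (length m)
                        (Poly_Mapping.single (mono_m1 (tl m)) 1)) (mono_m1 n)"

definition S :: "nat \<Rightarrow> nat \<Rightarrow> nat list set" where
  "S N r = {ns. length ns = r \<and> sum_list ns = N \<and> (\<forall>k\<in>set ns. k \<ge> 3 \<and> odd k)}"

text \<open>S_{N,r} listed in lexicographically decreasing order.\<close>
definition Slist :: "nat \<Rightarrow> nat \<Rightarrow> nat list list" where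
  "Slist N r = rev (sorted_list_of_set (S N r))"

definition Sidx_mat :: "nat \<Rightarrow> nat \<Rightarrow> (nat list \<Rightarrow> nat list \<Rightarrow> rat) \<Rightarrow> rat mat" where
  "Sidx_mat N r F = (let L = Slist N r in mat (length L) (length L) (\<lambda>(a, b). F (L ! a) (L ! b)))"

definition E_mat :: "nat \<Rightarrow> nat \<Rightarrow> rat mat" where
  "E_mat N r = Sidx_mat N r ecoef"

definition Ej_mat :: "nat \<Rightarrow> nat \<Rightarrow> nat \<Rightarrow> rat mat" where
  "Ej_mat j N r = Sidx_mat N r (\<lambda>m n.
      (if take (r - j) m = take (r - j) n then 1 else 0) * ecoef (drop (r - j) m) (drop (r - j) n))"

definition Eprod :: "nat \<Rightarrow> nat \<Rightarrow> nat \<Rightarrow> rat mat" where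
  "Eprod k N r = foldr (\<lambda>j A. Ej_mat j N r * A) [2..<k + 1] (1\<^sub>m (card (S N r)))"

definition C_mat :: "nat \<Rightarrow> nat \<Rightarrow> rat mat" where
  "C_mat N r = Eprod (r - 1) N r * E_mat N r"

definition obs :: "rat fps" where
  "obs = fps_X ^ 3 / (1 - fps_X ^ 2)"

end

theory Submission
  imports Defs
begin

definition MM :: "(nat list \<Rightarrow> nat list \<Rightarrow> rat) \<Rightarrow> nat list list \<Rightarrow> rat mat" where
  "MM F L = mat (length L) (length L) (\<lambda>(i, j). F (L ! i) (L ! j))"

lemma MM_append:
  assumes "\<forall>a\<in>set X. \<forall>b\<in>set Y. F a b = 0 \<and> F b a = 0"
  shows "MM F (X @ Y) = four_block_mat (MM F X) (0\<^sub>m (length X) (length Y)) (0\<^sub>m (length Y) (length X)) (MM F Y)"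
  apply (rule eq_matI)
  using assms by (auto simp: MM_def nth_append)

lemma kernel_dim_MM: "kernel_dim (MM F L) = kernel.dim (length L) (MM F L)"
  unfolding kernel_dim_def MM_def by simp

lemma MM_carrier: "MM F L \<in> carrier_mat (length L) (length L)"
  unfolding MM_def by simp

lemma block_kernel:
  assumes "distinct ks" "\<And>k a. a \<in> set (B k) \<Longrightarrow> g a = k"
    "\<And>a b. g a \<noteq> g b \<Longrightarrow> F a b = 0"
  shows "kernel_dim (MM F (concat (map B ks))) = (\<Sum>k\<leftarrow>ks. kernel_dim (MM F (B k)))"
  using assms(1)
proof (induction ks)
  case Nil
  show ?case by (simp add: MM_def kernel_dim_code)
next
  case (Cons k ks)
  have cross: "\<forall>a\<in>set (B k). \<forall>b\<in>set (concat (map B ks)). F a b = 0 \<and> F b a = 0"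
  proof (intro ballI)
    fix a b assume a: "a \<in> set (B k)" and b: "b \<in> set (concat (map B ks))"
    from b obtain k' where "k' \<in> set ks" "b \<in> set (B k')" by auto
    then have "g b = k'" "k' \<noteq> k" using assms(2) Cons.prems by auto
    moreover have "g a = k" using a assms(2) by auto
    ultimately show "F a b = 0 \<and> F b a = 0" using assms(3) by metis
  qed
  have "kernel_dim (MM F (concat (map B (k # ks))))
      = kernel.dim (length (B k) + length (concat (map B ks))) (MM F (B k @ concat (map B ks)))"
    using kernel_dim_MM[of F "B k @ concat (map B ks)"] by simp
  also have "\<dots> = kernel.dim (length (B k)) (MM F (B k)) + kernel.dim (length (concat (map B ks))) (MM F (concat (map B ks)))"
    by (rule kernel_four_block_0_mat[OF MM_append[OF cross] MM_carrier MM_carrier])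
  also have "\<dots> = kernel_dim (MM F (B k)) + (\<Sum>k\<leftarrow>ks. kernel_dim (MM F (B k)))"
    using Cons by (simp add: kernel_dim_MM)
  finally show ?case by simp
qed

lemma S_finite: "finite (S N r)"
proof -
  have "S N r \<subseteq> {xs. set xs \<subseteq> {0..N} \<and> length xs = r}"
    unfolding S_def using member_le_sum_list by fastforce
  thus ?thesis using finite_lists_length_eq[of "{0..N}" r] finite_subset by blast
qed

lemma Slist_set: "set (Slist N r) = S N r" and Slist_distinct: "distinct (Slist N r)"
  and Slist_length: "length (Slist N r) = card (S N r)"
  unfolding Slist_def using S_finite by (auto simp: distinct_card[symmetric])

lemma Sidx_MM: "Sidx_mat N r F = MM F (Slist N r)"
  unfolding Sidx_mat_def MM_def Let_def by simp

lemma Sidx_carrier: "Sidx_mat N r F \<in> carrier_mat (card (S N r)) (card (S N r))"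
  unfolding Sidx_MM using MM_carrier Slist_length by metis

definition pmul :: "nat list set \<Rightarrow> (nat list \<Rightarrow> nat list \<Rightarrow> rat) \<Rightarrow> (nat list \<Rightarrow> nat list \<Rightarrow> rat) \<Rightarrow> nat list \<Rightarrow> nat list \<Rightarrow> rat" where
  "pmul T F G m n = (\<Sum>p\<in>T. F m p * G p n)"

definition delta :: "nat list \<Rightarrow> nat list \<Rightarrow> rat" where
  "delta m n = (if m = n then 1 else 0)"

definition ej :: "nat \<Rightarrow> nat \<Rightarrow> nat list \<Rightarrow> nat list \<Rightarrow> rat" where
  "ej j r = (\<lambda>m n. (if take (r - j) m = take (r - j) n then 1 else 0) * ecoef (drop (r - j) m) (drop (r - j) n))"

definition EF :: "nat list \<Rightarrow> nat \<Rightarrow> nat \<Rightarrow> nat list \<Rightarrow> nat list \<Rightarrow> rat" where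
  "EF js N r = foldr (\<lambda>j A. pmul (S N r) (ej j r) A) js delta"

lemma sum_nth_distinct:
  assumes "distinct L"
  shows "(\<Sum>t\<in>{0..<length L}. f (L ! t)) = (\<Sum>p\<in>set L. f p)"
proof -
  have "(\<Sum>t\<in>{0..<length L}. f (L ! t)) = sum_list (map f L)"
    by (simp add: sum_list_sum_nth)
  thus ?thesis using assms by (simp add: sum_list_distinct_conv_sum_set)
qed

lemma Sidx_mult: "Sidx_mat N r F * Sidx_mat N r G = Sidx_mat N r (pmul (S N r) F G)"
proof -
  let ?L = "Slist N r"
  show ?thesis unfolding Sidx_MM
  proof (rule eq_matI)
    fix i j assume i: "i < dim_row (MM (pmul (S N r) F G) ?L)" and j: "j < dim_col (MM (pmul (S N r) F G) ?L)"
    have "(MM F ?L * MM G ?L) $$ (i, j) = (\<Sum>t\<in>{0..<length ?L}. F (?L ! i) (?L ! t) * G (?L ! t) (?L ! j))"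
      using i j by (simp add: MM_def scalar_prod_def)
    also have "\<dots> = pmul (S N r) F G (?L ! i) (?L ! j)"
      unfolding pmul_def
      by (subst sum_nth_distinct[OF Slist_distinct, where f = "\<lambda>p. F (?L ! i) p * G p (?L ! j)"]) (simp add: Slist_set)
    finally show "(MM F ?L * MM G ?L) $$ (i, j) = MM (pmul (S N r) F G) ?L $$ (i, j)"
      using i j by (simp add: MM_def)
  qed (auto simp: MM_def)
qed

lemma Sidx_one: "1\<^sub>m (card (S N r)) = Sidx_mat N r delta"
  unfolding Sidx_MM Slist_length[symmetric]
  by (rule eq_matI) (auto simp: MM_def delta_def nth_eq_iff_index_eq[OF Slist_distinct])

lemma Eprod_EF_gen: "foldr (\<lambda>j A. Ej_mat j N r * A) js (1\<^sub>m (card (S N r))) = Sidx_mat N r (EF js N r)"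
  by (induction js) (simp_all add: EF_def Sidx_one Ej_mat_def Sidx_mult ej_def[symmetric])

lemma Eprod_EF: "Eprod k N r = Sidx_mat N r (EF [2..<k+1] N r)"
  unfolding Eprod_def by (rule Eprod_EF_gen)

lemma S_Cons:
  assumes "k \<ge> 3" "odd k" "k \<le> N" "r \<ge> 1"
  shows "{p\<in>S N r. hd p = k} = Cons k ` S (N - k) (r - 1)"
proof (intro equalityI subsetI)
  fix p assume "p \<in> {p\<in>S N r. hd p = k}"
  then have p: "length p = r" "sum_list p = N" "\<forall>x\<in>set p. x \<ge> 3 \<and> odd x" "hd p = k"
    by (auto simp: S_def)
  then obtain q where "p = k # q" using assms(4) by (cases p) auto
  then show "p \<in> Cons k ` S (N - k) (r - 1)" using p by (auto simp: S_def)
next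
  fix p assume "p \<in> Cons k ` S (N - k) (r - 1)"
  then obtain q where "p = k # q" "q \<in> S (N - k) (r - 1)" by auto
  then show "p \<in> {p\<in>S N r. hd p = k}" using assms by (auto simp: S_def)
qed

lemma S_hd_sum:
  assumes "k \<ge> 3" "odd k" "k \<le> N" "r \<ge> 1" "\<And>p. p \<in> S N r \<Longrightarrow> hd p \<noteq> k \<Longrightarrow> f p = 0"
  shows "(\<Sum>p\<in>S N r. f p) = (\<Sum>q\<in>S (N - k) (r - 1). f (k # q))"
proof -
  have "(\<Sum>p\<in>S N r. f p) = (\<Sum>p\<in>S N r. if hd p = k then f p else 0)"
    using assms(5) by (intro sum.cong) auto
  also have "\<dots> = (\<Sum>p\<in>{p\<in>S N r. hd p = k}. f p)"
    using S_finite by (simp add: sum.inter_filter)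
  also have "\<dots> = (\<Sum>p\<in>Cons k ` S (N - k) (r - 1). f p)"
    using S_Cons[OF assms(1-4)] by simp
  also have "\<dots> = (\<Sum>q\<in>S (N - k) (r - 1). f (k # q))"
    by (subst sum.reindex) (auto simp: inj_on_def)
  finally show ?thesis .
qed

lemma EF_block:
  assumes "r \<ge> 2" "\<forall>j\<in>set js. j < r" "k \<ge> 3" "odd k" "k \<le> N"
  shows "EF js N r (k # a) (l # b) = (if k = l then EF js (N - k) (r - 1) a b else 0)"
  using assms(2)
proof (induction js arbitrary: a)
  case Nil
  show ?case by (simp add: EF_def delta_def)
next
  case (Cons j js)
  then have jr: "j < r" and IH: "\<And>a. EF js N r (k # a) (l # b) = (if k = l then EF js (N - k) (r - 1) a b else 0)"
    by auto
  obtain t where t: "r - j = Suc t" using jr by (metis Suc_diff_Suc)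
  have t': "r - 1 - j = t" "r - Suc j = t" using t by simp_all
  have "EF (j # js) N r (k # a) (l # b) = (\<Sum>p\<in>S N r. ej j r (k # a) p * EF js N r p (l # b))"
    by (simp add: EF_def pmul_def)
  also have "\<dots> = (\<Sum>q\<in>S (N - k) (r - 1). ej j r (k # a) (k # q) * EF js N r (k # q) (l # b))"
  proof (rule S_hd_sum)
    fix p assume p: "p \<in> S N r" "hd p \<noteq> k"
    then have "p \<noteq> []" using assms(1) by (auto simp: S_def)
    then obtain x xs where "p = x # xs" "x \<noteq> k" using p by (cases p) auto
    then show "ej j r (k # a) p * EF js N r p (l # b) = 0" by (simp add: ej_def t)
  qed (use assms in auto)
  also have "\<dots> = (\<Sum>q\<in>S (N - k) (r - 1). ej j (r - 1) a q * (if k = l then EF js (N - k) (r - 1) q b else 0))"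
    using IH by (simp add: ej_def t t')
  also have "\<dots> = (if k = l then EF (j # js) (N - k) (r - 1) a b else 0)"
    by (simp add: EF_def pmul_def)
  finally show ?case .
qed

lemma sorted_concat_Cons:
  assumes "sorted_wrt (<) (ks::nat list)" "\<And>k. sorted_wrt (<) (f k :: nat list list)"
  shows "sorted_wrt (<) (concat (map (\<lambda>k. map (Cons k) (f k)) ks))"
  using assms(1)
proof (induction ks)
  case Nil then show ?case by simp
next
  case (Cons k ks)
  have "sorted_wrt (<) (map (Cons k) (f k))" using assms(2)[of k] by (simp add: sorted_wrt_map)
  then show ?case using Cons by (auto simp: sorted_wrt_append)
qed

lemma S_decomp:
  assumes "r \<ge> 2"
  shows "S N r = (\<Union>k\<in>set (filter odd [3..<N+1]). Cons k ` S (N - k) (r - 1))"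
proof (intro equalityI subsetI)
  fix p assume p: "p \<in> S N r"
  then have "p \<noteq> []" using assms by (auto simp: S_def)
  then obtain k q where pk: "p = k # q" by (cases p) auto
  have "k \<le> N" using p pk by (auto simp: S_def)
  then have "p \<in> {p\<in>S N r. hd p = k}" "k \<ge> 3" "odd k" using p pk by (auto simp: S_def)
  then have "p \<in> Cons k ` S (N - k) (r - 1)" using S_Cons[of k N r] \<open>k \<le> N\<close> assms by auto
  moreover have "k \<in> set (filter odd [3..<N+1])" using \<open>k \<le> N\<close> \<open>k \<ge> 3\<close> \<open>odd k\<close> by (simp only: set_filter set_upt) auto
  ultimately show "p \<in> (\<Union>k\<in>set (filter odd [3..<N+1]). Cons k ` S (N - k) (r - 1))"
    by blast
next
  fix p assume "p \<in> (\<Union>k\<in>set (filter odd [3..<N+1]). Cons k ` S (N - k) (r - 1))"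
  then obtain k where "k \<in> set (filter odd [3..<N+1])" "p \<in> Cons k ` S (N - k) (r - 1)" by blast
  moreover then have "k \<ge> 3 \<and> odd k \<and> k \<le> N" by (simp only: set_filter set_upt) auto
  ultimately show "p \<in> S N r" using S_Cons[of k N r] assms
    by (metis (no_types, lifting) mem_Collect_eq one_le_numeral order_trans)
qed

lemma Slist_decomp:
  assumes "r \<ge> 2"
  shows "Slist N r = concat (map (\<lambda>k. map (Cons k) (Slist (N - k) (r - 1))) (rev (filter odd [3..<N+1])))"
proof -
  define ks where "ks = filter odd [3..<N+1]"
  define L where "L = concat (map (\<lambda>k. map (Cons k) (sorted_list_of_set (S (N - k) (r - 1)))) ks)"
  have "sorted_wrt (<) ks" unfolding ks_def by (rule sorted_wrt_filter[OF sorted_wrt_upt])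
  then have ss: "sorted_wrt (<) L" unfolding L_def
    by (intro sorted_concat_Cons) auto
  have "set L = (\<Union>k\<in>set ks. Cons k ` S (N - k) (r - 1))" unfolding L_def using S_finite by auto
  then have "set L = S N r" unfolding ks_def S_decomp[OF assms] .
  then have "sorted_list_of_set (S N r) = L"
    using ss sorted_list_of_set.idem_if_sorted_distinct[of L] by (simp add: strict_sorted_iff)
  then have "Slist N r = rev L" unfolding Slist_def by simp
  also have "\<dots> = concat (map (\<lambda>k. map (Cons k) (Slist (N - k) (r - 1))) (rev ks))"
    unfolding L_def Slist_def by (simp add: rev_concat rev_map o_def)
  finally show ?thesis unfolding ks_def .
qed

lemma MM_cong: "(\<And>a b. a \<in> set L \<Longrightarrow> b \<in> set L \<Longrightarrow> F a b = G a b) \<Longrightarrow> MM F L = MM G L"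
  by (rule eq_matI) (auto simp: MM_def)

lemma MM_map: "MM F (map h L) = MM (\<lambda>a b. F (h a) (h b)) L"
  by (rule eq_matI) (auto simp: MM_def)

lemma foldr_assoc:
  fixes M :: "nat \<Rightarrow> rat mat"
  assumes "\<And>j. j \<in> set js \<Longrightarrow> M j \<in> carrier_mat n n" "B \<in> carrier_mat n n"
  shows "foldr (\<lambda>j A. M j * A) js B = foldr (\<lambda>j A. M j * A) js (1\<^sub>m n) * B
       \<and> foldr (\<lambda>j A. M j * A) js (1\<^sub>m n) \<in> carrier_mat n n"
  using assms(1)
proof (induction js)
  case Nil
  have "1\<^sub>m n * B = B" by (rule left_mult_one_mat[OF assms(2)])
  then show ?case by simp
next
  case (Cons j js)
  then have IH: "foldr (\<lambda>j A. M j * A) js B = foldr (\<lambda>j A. M j * A) js (1\<^sub>m n) * B"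
    "foldr (\<lambda>j A. M j * A) js (1\<^sub>m n) \<in> carrier_mat n n" and Mj: "M j \<in> carrier_mat n n" by auto
  show ?case using IH Mj assms(2) by (simp add: assoc_mult_mat[of _ n n _ n _ n])
qed

lemma Ej_E: "Ej_mat s N s = E_mat N s"
  unfolding Ej_mat_def E_mat_def by simp

lemma Eprod_C:
  assumes "s \<ge> 2"
  shows "Eprod s N s = C_mat N s"
proof -
  let ?M = "\<lambda>j. Ej_mat j N s"
  let ?n = "card (S N s)"
  have js: "[2..<s+1] = [2..<s] @ [s]" using assms by simp
  have car: "\<And>j. ?M j \<in> carrier_mat ?n ?n" unfolding Ej_mat_def by (rule Sidx_carrier)
  have "Eprod s N s = foldr (\<lambda>j A. ?M j * A) [2..<s] (?M s * 1\<^sub>m ?n)"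
    unfolding Eprod_def js by simp
  also have "\<dots> = foldr (\<lambda>j A. ?M j * A) [2..<s] (1\<^sub>m ?n) * (?M s * 1\<^sub>m ?n)"
    using conjunct1[OF foldr_assoc[of "[2..<s]" ?M ?n "?M s * 1\<^sub>m ?n", OF car mult_carrier_mat[OF car[of s] one_carrier_mat]]] .
  also have "\<dots> = Eprod (s - 1) N s * E_mat N s"
    unfolding Eprod_def using assms car[of s] by (simp add: Ej_E)
  finally show ?thesis unfolding C_mat_def .
qed

lemma kernel_Eprod:
  assumes "r \<ge> 3"
  shows "kernel_dim (Eprod (r - 1) N r) = (\<Sum>k\<leftarrow>rev (filter odd [3..<N+1]). kernel_dim (C_mat (N - k) (r - 1)))"
proof -
  define F where "F = EF [2..<r] N r"
  define F' where "F' = (\<lambda>a b. if hd a = hd b then F a b else 0)"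
  define ks where "ks = rev (filter odd [3..<N+1])"
  define B where "B = (\<lambda>k. map (Cons k) (Slist (N - k) (r - 1)))"
  have r2: "r \<ge> 2" using assms by simp
  have kval: "k \<ge> 3 \<and> odd k \<and> k \<le> N" if "k \<in> set ks" for k
    using that unfolding ks_def by (simp only: set_rev set_filter set_upt) auto
  have blk: "F (k # a) (l # b) = (if k = l then EF [2..<r] (N - k) (r - 1) a b else 0)"
    if "k \<in> set ks" for k l a b
    unfolding F_def using kval[OF that] r2 by (intro EF_block) auto
  have SL: "Slist N r = concat (map B ks)" unfolding B_def ks_def by (rule Slist_decomp[OF r2])
  have inB: "\<exists>a'. a = k # a'" if "a \<in> set (B k)" for a k using that unfolding B_def by auto
  have "kernel_dim (Eprod (r - 1) N r) = kernel_dim (MM F (concat (map B ks)))"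
    unfolding Eprod_EF Sidx_MM F_def SL[symmetric] using r2 by simp
  also have "MM F (concat (map B ks)) = MM F' (concat (map B ks))"
  proof (rule MM_cong)
    fix a b assume a: "a \<in> set (concat (map B ks))" and b: "b \<in> set (concat (map B ks))"
    from a obtain k where k: "k \<in> set ks" "a \<in> set (B k)" by auto
    then obtain a' where "a = k # a'" using inB by blast
    moreover from b obtain l where "l \<in> set ks" "b \<in> set (B l)" by auto
    then obtain b' where "b = l # b'" using inB by blast
    moreover note k
    ultimately show "F a b = F' a b" unfolding F'_def using blk by auto
  qed
  also have "kernel_dim (MM F' (concat (map B ks))) = (\<Sum>k\<leftarrow>ks. kernel_dim (MM F' (B k)))"
    by (rule block_kernel[where g = hd]) (auto simp: ks_def B_def F'_def)
  also have "\<dots> = (\<Sum>k\<leftarrow>ks. kernel_dim (C_mat (N - k) (r - 1)))"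
  proof (rule arg_cong[where f = sum_list], rule map_cong[OF refl])
    fix k assume k: "k \<in> set ks"
    have "MM F' (B k) = MM (EF [2..<r] (N - k) (r - 1)) (Slist (N - k) (r - 1))"
      unfolding B_def MM_map F'_def using blk[OF k] by simp
    also have "\<dots> = Eprod (r - 1) (N - k) (r - 1)"
      unfolding Eprod_EF Sidx_MM using r2 by simp
    also have "\<dots> = C_mat (N - k) (r - 1)" using assms by (intro Eprod_C) auto
    finally show "kernel_dim (MM F' (B k)) = kernel_dim (C_mat (N - k) (r - 1))" by simp
  qed
  finally show ?thesis unfolding ks_def .
qed

lemma obs_nth: "fps_nth obs n = (if 3 \<le> n \<and> odd n then 1 else 0)"
proof -
  define A :: "rat fps" where "A = Abs_fps (\<lambda>n. if 3 \<le> n \<and> odd n then 1 else 0)"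
  have "A * (1 - fps_X ^ 2) = fps_X ^ 3"
  proof (rule fps_ext)
    fix n
    have "fps_nth (A * (1 - fps_X ^ 2)) n = fps_nth A n - fps_nth (A * fps_X ^ 2) n" by (simp add: right_diff_distrib)
    also have "\<dots> = fps_nth A n - (if n < 2 then 0 else fps_nth A (n - 2))" by (simp add: fps_X_power_mult_right_nth)
    also have "\<dots> = fps_nth (fps_X ^ 3 :: rat fps) n"
    proof -
      have h: "odd n \<Longrightarrow> n \<ge> 3 \<Longrightarrow> n = 3 \<or> n - 2 \<ge> 3" by presburger
      show ?thesis unfolding A_def using h by (auto simp: fps_X_power_nth)
    qed
    finally show "fps_nth (A * (1 - fps_X ^ 2)) n = fps_nth (fps_X ^ 3 :: rat fps) n" .
  qed
  moreover have "(1 - fps_X ^ 2 :: rat fps) \<noteq> 0"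
  proof
    assume "(1 - fps_X ^ 2 :: rat fps) = 0"
    then have "fps_nth (1 - fps_X ^ 2 :: rat fps) 0 = 0" by simp
    then show False by simp
  qed
  ultimately have "obs = A" unfolding obs_def by (metis nonzero_mult_div_cancel_right)
  then have "fps_nth obs n = fps_nth A n" by (rule arg_cong)
  then show ?thesis unfolding A_def by simp
qed

lemma S_zero: "s \<ge> 1 \<Longrightarrow> S 0 s = {}"
proof (rule equals0I)
  fix p assume s: "s \<ge> 1" and p: "p \<in> S 0 s"
  then obtain x xs where "p = x # xs" unfolding S_def by (cases p) auto
  then show False using p unfolding S_def by auto
qed

lemma kd_C_zero: "s \<ge> 1 \<Longrightarrow> kernel_dim (C_mat 0 s) = 0"
  unfolding kernel_dim_code C_mat_def E_mat_def Sidx_mat_def Let_def Slist_def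
  by (simp add: S_zero)

theorem corollary4p3:
  fixes r :: nat
  assumes "r \<ge> 3"
  shows "Abs_fps (\<lambda>N. if N > 0 then of_nat (kernel_dim (Eprod (r - 1) N r)) else 0)
       = obs * Abs_fps (\<lambda>N. if N > 0 then of_nat (kernel_dim (C_mat N (r - 1))) else (0::rat))"
proof (rule fps_ext)
  fix N
  define f where "f k = (of_nat (kernel_dim (C_mat (N - k) (r - 1))) :: rat)" for k
  define K where "K = {k\<in>{0..N}. 3 \<le> k \<and> odd k}"
  define G where "G = Abs_fps (\<lambda>N. if N > 0 then of_nat (kernel_dim (C_mat N (r - 1))) else (0::rat))"
  have setK: "set (rev (filter odd [3..<N+1])) = K"
    unfolding K_def by (simp only: set_rev set_filter set_upt) auto
  have "kernel_dim (Eprod (r - 1) N r) = (\<Sum>k\<leftarrow>rev (filter odd [3..<N+1]). kernel_dim (C_mat (N - k) (r - 1)))"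
    by (rule kernel_Eprod[OF assms])
  also have "\<dots> = (\<Sum>k\<in>K. kernel_dim (C_mat (N - k) (r - 1)))"
  proof -
    have d: "distinct (rev (filter odd [3..<N+1]))" by simp
    show ?thesis by (simp only: sum_list_distinct_conv_sum_set[OF d] setK)
  qed
  finally have LHS: "(of_nat (kernel_dim (Eprod (r - 1) N r)) :: rat) = (\<Sum>k\<in>K. f k)"
    unfolding f_def by simp
  have "fps_nth (obs * G) N = (\<Sum>i=0..N. fps_nth obs i * fps_nth G (N - i))"
    by (rule fps_mult_nth)
  also have "\<dots> = (\<Sum>i\<in>{0..N}. if 3 \<le> i \<and> odd i then f i else 0)"
  proof (rule sum.cong[OF refl])
    fix i assume i: "i \<in> {0..N}"
    have z: "f N = 0" unfolding f_def using kd_C_zero[of "r - 1"] assms by simp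
    show "fps_nth obs i * fps_nth G (N - i) = (if 3 \<le> i \<and> odd i then f i else 0)"
      using i z unfolding obs_nth G_def f_def by (cases "N - i = 0") auto
  qed
  also have "\<dots> = (\<Sum>k\<in>K. f k)" unfolding K_def by (rule sum.inter_filter[symmetric]) simp
  finally have RHS: "fps_nth (obs * G) N = (\<Sum>k\<in>K. f k)" .
  have K0: "N = 0 \<Longrightarrow> K = {}" unfolding K_def by auto
  show "fps_nth (Abs_fps (\<lambda>N. if N > 0 then of_nat (kernel_dim (Eprod (r - 1) N r)) else 0)) N
      = fps_nth (obs * Abs_fps (\<lambda>N. if N > 0 then of_nat (kernel_dim (C_mat N (r - 1))) else (0::rat))) N"
    using RHS LHS K0 unfolding G_def by (cases "N = 0") auto
qed

end
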